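(* Let $R$ be a unital associative algebra over an infinite field $F$, let $n\geq 3$ be an integer, and let $p\in F[x]$ be a nonconstant polynomial. Then every (upper or lower) triangular matrix in $\mathrm{M}_n(R)$ can be written as a product of two elements of $p[\mathrm{M}_n(R),\mathrm{M}_n(R)]=\{p(AB)-p(BA)\mid A,B\in\mathrm{M}_n(R)\}$. *)

theory Defs
  imports "Jordan_Normal_Form.Matrix" "HOL-Computational_Algebra.Polynomial"
begin

definition F_algebra :: "('f::field \<Rightarrow> 'r::ring_1 \<Rightarrow> 'r) \<Rightarrow> bool" where
  "F_algebra sm \<longleftrightarrow>
     (\<forall>a b x. sm (a + b) x = sm a x + sm b x) \<and>
     (\<forall>a x y. sm a (x + y) = sm a x + sm a y) \<and>
     (\<forall>a b x. sm (a * b) x = sm a (sm b x)) \<and>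
     (\<forall>x. sm 1 x = x) \<and>
     (\<forall>a x y. sm a (x * y) = sm a x * y \<and> sm a (x * y) = x * sm a y)"

definition poly_mat :: "('f::field \<Rightarrow> 'r::ring_1 \<Rightarrow> 'r) \<Rightarrow> 'f poly \<Rightarrow> 'r mat \<Rightarrow> 'r mat" where
  "poly_mat sm p M = mat (dim_row M) (dim_col M)
     (\<lambda>(i,j). \<Sum>k\<le>degree p. sm (coeff p k) ((M ^\<^sub>m k) $$ (i,j)))"

definition poly_commutators :: "('f::field \<Rightarrow> 'r::ring_1 \<Rightarrow> 'r) \<Rightarrow> 'f poly \<Rightarrow> nat \<Rightarrow> 'r mat set" where
  "poly_commutators sm p n =
     {poly_mat sm p (A * B) - poly_mat sm p (B * A) | A B.
        A \<in> carrier_mat n n \<and> B \<in> carrier_mat n n}"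

definition lower_triangular :: "'a::zero mat \<Rightarrow> bool" where
  "lower_triangular A \<longleftrightarrow> (\<forall>i < dim_row A. \<forall>j < dim_col A. i < j \<longrightarrow> A $$ (i,j) = 0)"

end

theory Submission
  imports Defs
begin

lemma mult_entry:
  assumes "A \<in> carrier_mat n m" "B \<in> carrier_mat m k" "i < n" "j < k"
  shows "(A * B) $$ (i,j) = (\<Sum>l<m. A $$ (i,l) * B $$ (l,j))"
  using assms by (simp add: scalar_prod_def atLeast0LessThan)

lemma lower_diag:
  fixes \<zeta> :: "nat \<Rightarrow> 'r::ring_1" and \<delta> :: "nat \<Rightarrow> nat \<Rightarrow> 'r"
  assumes cent: "\<And>i x. \<zeta> i * x = x * \<zeta> i"
  shows "(\<And>i j. i < n \<Longrightarrow> j < n \<Longrightarrow> i \<noteq> j \<Longrightarrow> (\<zeta> i - \<zeta> j) * \<delta> i j = 1)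
    \<Longrightarrow> L \<in> carrier_mat n n \<Longrightarrow> (\<forall>i<n. \<forall>j<n. i < j \<longrightarrow> L $$ (i,j) = 0)
    \<Longrightarrow> (\<forall>i<n. L $$ (i,i) = \<zeta> i)
    \<Longrightarrow> \<exists>W V. W \<in> carrier_mat n n \<and> V \<in> carrier_mat n n \<and> W * V = 1\<^sub>m n \<and> V * W = 1\<^sub>m n
         \<and> L * W = W * mat_diag n \<zeta>"
proof (induction n arbitrary: L)
  case 0
  show ?case
    by (rule exI[of _ "1\<^sub>m 0"], rule exI[of _ "1\<^sub>m 0"], insert 0, auto intro!: eq_matI simp: mat_diag_def)
next
  case (Suc n)
  note inv = Suc.prems(1)
  have Lc: "L \<in> carrier_mat (Suc n) (Suc n)" using Suc.prems by auto
  define L' where "L' = mat n n (\<lambda>(i,j). L $$ (i,j))"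
  have L'c: "L' \<in> carrier_mat n n" unfolding L'_def by auto
  have "\<exists>W V. W \<in> carrier_mat n n \<and> V \<in> carrier_mat n n \<and> W * V = 1\<^sub>m n \<and> V * W = 1\<^sub>m n
         \<and> L' * W = W * mat_diag n \<zeta>"
    by (rule Suc.IH, rule inv, auto simp: L'_def Suc.prems(3,4))
  then obtain W' V' where W'c: "W' \<in> carrier_mat n n" and V'c: "V' \<in> carrier_mat n n"
    and WV': "W' * V' = 1\<^sub>m n" and VW': "V' * W' = 1\<^sub>m n" and LW': "L' * W' = W' * mat_diag n \<zeta>"
    by blast
  define s where "s j = (\<Sum>k<n. L $$ (n,k) * W' $$ (k,j))" for j
  define w where "w j = \<delta> j n * s j" for j
  define u where "u j = - (\<Sum>k<n. w k * V' $$ (k,j))" for j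
  define W where "W = mat (Suc n) (Suc n) (\<lambda>(i,j). if i < n then (if j < n then W' $$ (i,j) else 0)
      else (if j < n then w j else 1))"
  define V where "V = mat (Suc n) (Suc n) (\<lambda>(i,j). if i < n then (if j < n then V' $$ (i,j) else 0)
      else (if j < n then u j else 1))"
  have Wc: "W \<in> carrier_mat (Suc n) (Suc n)" and Vc: "V \<in> carrier_mat (Suc n) (Suc n)"
    unfolding W_def V_def by auto
  have WV'e: "\<And>i j. i < n \<Longrightarrow> j < n \<Longrightarrow> (\<Sum>l<n. W' $$ (i,l) * V' $$ (l,j)) = (if i = j then 1 else 0)"
  proof -
    fix i j assume ij: "i < n" "j < n"
    have "(W' * V') $$ (i,j) = (\<Sum>l<n. W' $$ (i,l) * V' $$ (l,j))" by (rule mult_entry[OF W'c V'c ij])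
    thus "(\<Sum>l<n. W' $$ (i,l) * V' $$ (l,j)) = (if i = j then 1 else 0)" using WV' ij by simp
  qed
  have VW'e: "\<And>i j. i < n \<Longrightarrow> j < n \<Longrightarrow> (\<Sum>l<n. V' $$ (i,l) * W' $$ (l,j)) = (if i = j then 1 else 0)"
  proof -
    fix i j assume ij: "i < n" "j < n"
    have "(V' * W') $$ (i,j) = (\<Sum>l<n. V' $$ (i,l) * W' $$ (l,j))" by (rule mult_entry[OF V'c W'c ij])
    thus "(\<Sum>l<n. V' $$ (i,l) * W' $$ (l,j)) = (if i = j then 1 else 0)" using VW' ij by simp
  qed
  have LW'e: "\<And>i j. i < n \<Longrightarrow> j < n \<Longrightarrow> (\<Sum>l<n. L $$ (i,l) * W' $$ (l,j)) = W' $$ (i,j) * \<zeta> j"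
  proof -
    fix i j assume ij: "i < n" "j < n"
    have "(L' * W') $$ (i,j) = (W' * mat_diag n \<zeta>) $$ (i,j)" using LW' by simp
    also have "\<dots> = W' $$ (i,j) * \<zeta> j" using W'c ij by (simp add: mat_diag_mult_right)
    finally show "(\<Sum>l<n. L $$ (i,l) * W' $$ (l,j)) = W' $$ (i,j) * \<zeta> j"
      using mult_entry[OF L'c W'c ij] ij by (simp add: L'_def)
  qed
  have "W * V = 1\<^sub>m (Suc n)"
  proof (rule eq_matI)
    fix i j assume "i < dim_row (1\<^sub>m (Suc n))" "j < dim_col (1\<^sub>m (Suc n))"
    hence ij: "i < Suc n" "j < Suc n" by auto
    have "(W * V) $$ (i,j) = (\<Sum>l<n. W $$ (i,l) * V $$ (l,j)) + W $$ (i,n) * V $$ (n,j)"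
      using mult_entry[OF Wc Vc ij] by simp
    also have "\<dots> = 1\<^sub>m (Suc n) $$ (i,j)"
    proof (cases "i < n")
      case True
      then show ?thesis
      proof (cases "j < n")
        case True
        then show ?thesis using \<open>i < n\<close> WV'e[of i j] by (simp add: W_def V_def)
      next
        case False
        then show ?thesis using \<open>i < n\<close> ij by (simp add: W_def V_def)
      qed
    next
      case False
      hence i: "i = n" using ij by auto
      then show ?thesis
      proof (cases "j < n")
        case True
        then show ?thesis using i by (simp add: W_def V_def u_def)
      next
        case False
        then show ?thesis using i ij by (simp add: W_def V_def)
      qed
    qed
    finally show "(W * V) $$ (i,j) = 1\<^sub>m (Suc n) $$ (i,j)" .
  qed (insert Wc Vc, auto)
  moreover have "V * W = 1\<^sub>m (Suc n)"
  proof (rule eq_matI)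
    fix i j assume "i < dim_row (1\<^sub>m (Suc n))" "j < dim_col (1\<^sub>m (Suc n))"
    hence ij: "i < Suc n" "j < Suc n" by auto
    have "(V * W) $$ (i,j) = (\<Sum>l<n. V $$ (i,l) * W $$ (l,j)) + V $$ (i,n) * W $$ (n,j)"
      using mult_entry[OF Vc Wc ij] by simp
    also have "\<dots> = 1\<^sub>m (Suc n) $$ (i,j)"
    proof (cases "i < n")
      case True
      then show ?thesis
      proof (cases "j < n")
        case True
        then show ?thesis using \<open>i < n\<close> VW'e[of i j] by (simp add: W_def V_def)
      next
        case False
        then show ?thesis using \<open>i < n\<close> ij by (simp add: W_def V_def)
      qed
    next
      case False
      hence i: "i = n" using ij by auto
      then show ?thesis
      proof (cases "j < n")
        case True
        have "(\<Sum>l<n. u l * W' $$ (l,j)) = - (\<Sum>l<n. \<Sum>k<n. w k * V' $$ (k,l) * W' $$ (l,j))"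
          by (simp add: u_def sum_distrib_right sum_negf)
        also have "\<dots> = - (\<Sum>k<n. \<Sum>l<n. w k * (V' $$ (k,l) * W' $$ (l,j)))"
          by (subst sum.swap, simp add: mult.assoc)
        also have "\<dots> = - (\<Sum>k<n. w k * (if k = j then 1 else 0))"
          by (simp add: sum_distrib_left[symmetric] VW'e True)
        also have "\<dots> = - w j" using True by (simp add: if_distrib cong: if_cong)
        finally have "(\<Sum>l<n. u l * W' $$ (l,j)) = - w j" .
        then show ?thesis using i True by (simp add: W_def V_def)
      next
        case False
        then show ?thesis using i ij by (simp add: W_def V_def)
      qed
    qed
    finally show "(V * W) $$ (i,j) = 1\<^sub>m (Suc n) $$ (i,j)" .
  qed (insert Wc Vc, auto)
  moreover have "L * W = W * mat_diag (Suc n) \<zeta>"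
  proof (rule eq_matI)
    fix i j assume "i < dim_row (W * mat_diag (Suc n) \<zeta>)" "j < dim_col (W * mat_diag (Suc n) \<zeta>)"
    hence ij: "i < Suc n" "j < Suc n" using Wc by (auto simp: mat_diag_def)
    have r: "(W * mat_diag (Suc n) \<zeta>) $$ (i,j) = W $$ (i,j) * \<zeta> j"
      using Wc ij by (simp add: mat_diag_mult_right)
    have "(L * W) $$ (i,j) = (\<Sum>l<n. L $$ (i,l) * W $$ (l,j)) + L $$ (i,n) * W $$ (n,j)"
      using mult_entry[OF Lc Wc ij] by simp
    also have "\<dots> = W $$ (i,j) * \<zeta> j"
    proof (cases "i < n")
      case True
      have Lin: "L $$ (i,n) = 0" using Suc.prems(3) True by auto
      then show ?thesis
      proof (cases "j < n")
        case True
        then show ?thesis using \<open>i < n\<close> LW'e[of i j] Lin by (simp add: W_def)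
      next
        case False
        then show ?thesis using \<open>i < n\<close> ij Lin by (simp add: W_def)
      qed
    next
      case False
      hence i: "i = n" using ij by auto
      have Lnn: "L $$ (n,n) = \<zeta> n" using Suc.prems(4) by auto
      then show ?thesis
      proof (cases "j < n")
        case True
        have "(\<zeta> j - \<zeta> n) * \<delta> j n = 1" using inv[of j n] True by auto
        hence "(\<zeta> j - \<zeta> n) * (\<delta> j n * s j) = s j" by (metis mult.assoc mult_1)
        hence "s j + \<zeta> n * w j = w j * \<zeta> j"
          by (simp add: w_def algebra_simps cent[of j])
        then show ?thesis using i True Lnn by (simp add: W_def s_def)
      next
        case False
        hence "j = n" using ij by auto
        then show ?thesis using i Lnn by (simp add: W_def)
      qed
    qed
    finally show "(L * W) $$ (i,j) = (W * mat_diag (Suc n) \<zeta>) $$ (i,j)" using r by simp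
  qed (insert Lc Wc, auto simp: mat_diag_def)
  ultimately show ?case using Wc Vc by blast
qed

definition revm :: "nat \<Rightarrow> 'a mat \<Rightarrow> 'a mat" where
  "revm n A = mat n n (\<lambda>(i,j). A $$ (n - Suc i, n - Suc j))"

lemma revm_carrier[simp]: "revm n A \<in> carrier_mat n n"
  unfolding revm_def by auto

lemma revm_dim[simp]: "dim_row (revm n A) = n" "dim_col (revm n A) = n"
  unfolding revm_def by auto

lemma revm_index[simp]: "i < n \<Longrightarrow> j < n \<Longrightarrow> revm n A $$ (i,j) = A $$ (n - Suc i, n - Suc j)"
  unfolding revm_def by auto

lemma revm_revm: "A \<in> carrier_mat n n \<Longrightarrow> revm n (revm n A) = A"
  by (rule eq_matI, auto simp: Suc_diff_Suc)

lemma revm_mult: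
  fixes A B :: "'a::semiring_0 mat"
  assumes A: "A \<in> carrier_mat n n" and B: "B \<in> carrier_mat n n"
  shows "revm n (A * B) = revm n A * revm n B"
proof (rule eq_matI)
  fix i j assume "i < dim_row (revm n A * revm n B)" "j < dim_col (revm n A * revm n B)"
  hence ij: "i < n" "j < n" by auto
  have "(revm n A * revm n B) $$ (i,j) = (\<Sum>l<n. A $$ (n - Suc i, n - Suc l) * B $$ (n - Suc l, n - Suc j))"
    using mult_entry[OF revm_carrier revm_carrier ij] ij by simp
  also have "\<dots> = (\<Sum>l<n. A $$ (n - Suc i, l) * B $$ (l, n - Suc j))"
    by (rule sum.nat_diff_reindex[where g = "\<lambda>l. A $$ (n - Suc i, l) * B $$ (l, n - Suc j)"])
  also have "\<dots> = (A * B) $$ (n - Suc i, n - Suc j)"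
    using mult_entry[OF A B, of "n - Suc i" "n - Suc j"] ij by simp
  finally show "revm n (A * B) $$ (i,j) = (revm n A * revm n B) $$ (i,j)" using ij by simp
qed auto

lemma revm_one: "revm n (1\<^sub>m n) = (1\<^sub>m n :: 'a::zero_neq_one mat)"
  by (rule eq_matI, auto)

lemma revm_diag: "revm n (mat_diag n f) = mat_diag n (\<lambda>i. f (n - Suc i))"
  by (rule eq_matI, auto simp: mat_diag_def)

lemma upper_diag:
  fixes \<zeta> :: "nat \<Rightarrow> 'r::ring_1" and \<delta> :: "nat \<Rightarrow> nat \<Rightarrow> 'r"
  assumes cent: "\<And>i x. \<zeta> i * x = x * \<zeta> i"
    and inv: "\<And>i j. i < n \<Longrightarrow> j < n \<Longrightarrow> i \<noteq> j \<Longrightarrow> (\<zeta> i - \<zeta> j) * \<delta> i j = 1"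
    and U: "U \<in> carrier_mat n n" and up: "\<forall>i<n. \<forall>j<n. j < i \<longrightarrow> U $$ (i,j) = 0"
    and dg: "\<forall>i<n. U $$ (i,i) = \<zeta> i"
  shows "\<exists>W V. W \<in> carrier_mat n n \<and> V \<in> carrier_mat n n \<and> W * V = 1\<^sub>m n \<and> V * W = 1\<^sub>m n
         \<and> U * W = W * mat_diag n \<zeta>"
proof -
  define \<zeta>' where "\<zeta>' i = \<zeta> (n - Suc i)" for i
  define \<delta>' where "\<delta>' i j = \<delta> (n - Suc i) (n - Suc j)" for i j
  have "\<exists>W V. W \<in> carrier_mat n n \<and> V \<in> carrier_mat n n \<and> W * V = 1\<^sub>m n \<and> V * W = 1\<^sub>m n
         \<and> revm n U * W = W * mat_diag n \<zeta>'"
  proof (rule lower_diag[where \<delta> = \<delta>'])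
    show "\<zeta>' i * x = x * \<zeta>' i" for i x using cent unfolding \<zeta>'_def by simp
    show "(\<zeta>' i - \<zeta>' j) * \<delta>' i j = 1" if "i < n" "j < n" "i \<noteq> j" for i j
      using inv[of "n - Suc i" "n - Suc j"] that unfolding \<zeta>'_def \<delta>'_def by auto
    show "\<forall>i<n. \<forall>j<n. i < j \<longrightarrow> revm n U $$ (i, j) = 0" using up by auto
    show "\<forall>i<n. revm n U $$ (i, i) = \<zeta>' i" using dg unfolding \<zeta>'_def by auto
  qed simp
  then obtain W V where Wc: "W \<in> carrier_mat n n" and Vc: "V \<in> carrier_mat n n"
    and WV: "W * V = 1\<^sub>m n" and VW: "V * W = 1\<^sub>m n" and LW: "revm n U * W = W * mat_diag n \<zeta>'"
    by blast
  have dd: "mat_diag n (\<lambda>i. \<zeta>' (n - Suc i)) = mat_diag n \<zeta>"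
    by (rule eq_matI, auto simp: mat_diag_def \<zeta>'_def Suc_diff_Suc)
  have "U * revm n W = revm n (revm n U) * revm n W" using U by (simp add: revm_revm)
  also have "\<dots> = revm n (revm n U * W)" using Wc by (simp add: revm_mult)
  also have "\<dots> = revm n (W * mat_diag n \<zeta>')" using LW by simp
  also have "\<dots> = revm n W * mat_diag n \<zeta>" using Wc by (simp add: revm_mult revm_diag dd)
  finally have 1: "U * revm n W = revm n W * mat_diag n \<zeta>" .
  have 2: "revm n W * revm n V = 1\<^sub>m n" using Wc Vc WV by (simp add: revm_mult[symmetric] revm_one)
  have 3: "revm n V * revm n W = 1\<^sub>m n" using Wc Vc VW by (simp add: revm_mult[symmetric] revm_one)
  show ?thesis using 1 2 3 by (intro exI[of _ "revm n W"] exI[of _ "revm n V"], auto)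
qed

lemma sum_delta_mult: "(\<Sum>k<(n::nat). f k * (if k = a then c else 0)) = (if a < n then f a * (c::'a::semiring_0) else 0)"
  by (induction n) (auto simp: less_Suc_eq)

lemma upper_factor:
  fixes T :: "'a::ring_1 mat"
  assumes n: "n \<ge> 3" and T: "T \<in> carrier_mat n n" and up: "upper_triangular T"
  shows "\<exists>X Y. X \<in> carrier_mat n n \<and> Y \<in> carrier_mat n n \<and> (\<forall>i<n. X $$ (i,i) = 0)
     \<and> (\<forall>i<n. Y $$ (i,i) = 0) \<and> T = X * Y"
proof -
  define X where "X = mat n n (\<lambda>(i,k). if k = 0 then (if i = 0 then 0 else T $$ (i, n - 1))
     else if k = 1 then (if i = 0 then 1 else 0) else T $$ (i, k - 1))"
  define Y where "Y = mat n n (\<lambda>(k,j). if j = 0 then (if k = 1 then T $$ (0,0) else 0)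
     else if j = n - 1 then ((if k = 0 then 1 else 0) + (if k = 1 then T $$ (0, n - 1) else 0))
     else (if k = j + 1 then 1 else 0))"
  have Xc: "X \<in> carrier_mat n n" and Yc: "Y \<in> carrier_mat n n" unfolding X_def Y_def by auto
  have Tz: "T $$ (i,j) = 0" if "j < i" "i < n" for i j using up that T by auto
  have Xd: "\<forall>i<n. X $$ (i,i) = 0"
  proof (intro allI impI)
    fix i assume i: "i < n"
    show "X $$ (i,i) = 0"
    proof (cases "i \<le> 1")
      case True then show ?thesis using i by (auto simp: X_def)
    next
      case False then show ?thesis using i Tz[of "i - 1" i] by (auto simp: X_def)
    qed
  qed
  have Yd: "\<forall>i<n. Y $$ (i,i) = 0" using n by (auto simp: Y_def)
  have "X * Y = T"
  proof (rule eq_matI)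
    fix i j assume "i < dim_row T" "j < dim_col T"
    hence ij: "i < n" "j < n" using T by auto
    have e: "(X * Y) $$ (i,j) = (\<Sum>k<n. X $$ (i,k) * Y $$ (k,j))" by (rule mult_entry[OF Xc Yc ij])
    show "(X * Y) $$ (i,j) = T $$ (i,j)"
    proof (cases "j = 0")
      case True
      have "(\<Sum>k<n. X $$ (i,k) * Y $$ (k,j)) = (\<Sum>k<n. X $$ (i,k) * (if k = 1 then T $$ (0,0) else 0))"
        by (rule sum.cong, auto simp: Y_def True)
      also have "\<dots> = X $$ (i,1) * T $$ (0,0)" using n by (simp add: sum_delta_mult)
      also have "\<dots> = T $$ (i,j)" using ij True Tz[of 0 i] n by (auto simp: X_def)
      finally show ?thesis using e by simp
    next
      case j0: False
      show ?thesis
      proof (cases "j = n - 1")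
        case True
        have "(\<Sum>k<n. X $$ (i,k) * Y $$ (k,j)) = (\<Sum>k<n. X $$ (i,k) * (if k = 0 then 1 else 0))
          + (\<Sum>k<n. X $$ (i,k) * (if k = 1 then T $$ (0, n - 1) else 0))"
          unfolding sum.distrib[symmetric] distrib_left[symmetric]
          by (rule sum.cong, insert j0 True, auto simp: Y_def)
        also have "\<dots> = X $$ (i,0) + X $$ (i,1) * T $$ (0, n - 1)"
          using n by (simp add: sum_delta_mult)
        also have "\<dots> = T $$ (i,j)" using ij True n by (auto simp: X_def)
        finally show ?thesis using e by simp
      next
        case False
        have "(\<Sum>k<n. X $$ (i,k) * Y $$ (k,j)) = (\<Sum>k<n. X $$ (i,k) * (if k = j + 1 then 1 else 0))"
          by (rule sum.cong, insert j0 False ij, auto simp: Y_def)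
        also have "\<dots> = X $$ (i, j + 1)" using ij False by (auto simp: sum_delta_mult)
        also have "\<dots> = T $$ (i,j)" using ij j0 False by (auto simp: X_def)
        finally show ?thesis using e by simp
      qed
    qed
  qed (insert T Xc Yc, auto)
  thus ?thesis using Xc Yc Xd Yd by blast
qed

context
  fixes sm :: "'f::field \<Rightarrow> 'r::ring_1 \<Rightarrow> 'r"
  assumes FA: "F_algebra sm"
begin

lemma sm_addL: "sm (a + b) x = sm a x + sm b x" using FA unfolding F_algebra_def by blast
lemma sm_addR: "sm a (x + y) = sm a x + sm a y" using FA unfolding F_algebra_def by blast
lemma sm_assoc: "sm (a * b) x = sm a (sm b x)" using FA unfolding F_algebra_def by blast
lemma sm_one: "sm 1 x = x" using FA unfolding F_algebra_def by blast
lemma sm_multL: "sm a (x * y) = sm a x * y" using FA unfolding F_algebra_def by blast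
lemma sm_multR: "sm a (x * y) = x * sm a y" using FA unfolding F_algebra_def by blast

lemma sm_0R: "sm a 0 = 0"
  using sm_addR[of a 0 0] by simp

lemma sm_0L: "sm 0 x = 0"
  using sm_addL[of 0 0 x] by simp

lemma sm_diffL: "sm (a - b) x = sm a x - sm b x"
  using sm_addL[of "a - b" b x] by (simp add: algebra_simps)

lemma sm_sumR: "sm a (sum g A) = (\<Sum>i\<in>A. sm a (g i))"
  by (induction A rule: infinite_finite_induct) (auto simp: sm_0R sm_addR)

lemma sm_sumL: "sm (sum c A) x = (\<Sum>i\<in>A. sm (c i) x)"
  by (induction A rule: infinite_finite_induct) (auto simp: sm_0L sm_addL)

lemma sc_left: "sm a 1 * x = sm a x"
  using sm_multL[of a 1 x] by simp

lemma sc_right: "x * sm a 1 = sm a x"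
  using sm_multR[of a x 1] by simp

lemma sc_central: "sm a 1 * x = x * sm a 1"
  by (simp add: sc_left sc_right)

lemma sc_mult: "sm a 1 * sm b 1 = sm (a * b) 1"
  by (simp add: sc_left sm_assoc)

lemma sc_pow: "(sm a 1) ^ k = sm (a ^ k) 1"
  by (induction k) (auto simp: sm_one sc_mult)

lemma sm_sandwich: "sm c (y * s * z) = y * sm c s * z"
  using sm_multL[of c "y * s" z] sm_multR[of c y s] by simp

lemma diag_sandwich_entry:
  assumes W: "W \<in> carrier_mat n n" and V: "V \<in> carrier_mat n n" and ij: "i < n" "j < n"
  shows "(W * mat_diag n g * V) $$ (i,j) = (\<Sum>a<n. W $$ (i,a) * g a * V $$ (a,j))"
proof -
  have e: "W * mat_diag n g = mat n n (\<lambda>(i,j). W $$ (i,j) * g j)"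
    using W by (simp add: mat_diag_mult_right)
  have c: "mat n n (\<lambda>(i,j). W $$ (i,j) * g j) \<in> carrier_mat n n" by auto
  show ?thesis unfolding e using mult_entry[OF c V ij] ij by simp
qed

lemma pow_conj:
  assumes W: "W \<in> carrier_mat n n" and V: "V \<in> carrier_mat n n"
    and WV: "W * V = 1\<^sub>m n" and VW: "V * W = 1\<^sub>m n"
  shows "(W * mat_diag n (\<lambda>i. sm (x i) 1) * V) ^\<^sub>m k = W * mat_diag n (\<lambda>i. sm (x i ^ k) 1) * V"
proof (induction k)
  case 0
  have "mat_diag n (\<lambda>i. sm (x i ^ 0) 1) = 1\<^sub>m n" by (simp add: sm_one)
  then show ?case using W V WV by simp
next
  case (Suc k)
  define Dk where "Dk = mat_diag n (\<lambda>i. sm (x i ^ k) 1)"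
  define D where "D = mat_diag n (\<lambda>i. sm (x i) 1)"
  have Dkc: "Dk \<in> carrier_mat n n" and Dc: "D \<in> carrier_mat n n" unfolding Dk_def D_def by auto
  have DD: "Dk * D = mat_diag n (\<lambda>i. sm (x i ^ Suc k) 1)"
    unfolding Dk_def D_def by (simp add: sc_mult power_Suc2 mult.commute)
  have "(W * D * V) ^\<^sub>m Suc k = (W * Dk * V) * (W * D * V)"
    using Suc unfolding Dk_def D_def by simp
  also have "\<dots> = (W * Dk) * (V * (W * (D * V)))"
  proof -
    have WDk: "W * Dk \<in> carrier_mat n n" using W Dkc by auto
    have WD: "W * D \<in> carrier_mat n n" using W Dc by auto
    have WDV: "W * D * V \<in> carrier_mat n n" using WD V by auto
    have "(W * Dk * V) * (W * D * V) = (W * Dk) * (V * (W * D * V))"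
      by (rule assoc_mult_mat[OF WDk V WDV])
    moreover have e: "W * D * V = W * (D * V)" by (rule assoc_mult_mat[OF W Dc V])
    ultimately show ?thesis by (simp only: e)
  qed
  also have "V * (W * (D * V)) = D * V"
  proof -
    have DV: "D * V \<in> carrier_mat n n" using Dc V by auto
    have "V * (W * (D * V)) = (V * W) * (D * V)" by (rule assoc_mult_mat[OF V W DV, symmetric])
    also have "\<dots> = D * V" using VW left_mult_one_mat[OF DV] by simp
    finally show ?thesis .
  qed
  also have "(W * Dk) * (D * V) = W * (Dk * D) * V"
  proof -
    have WDk: "W * Dk \<in> carrier_mat n n" using W Dkc by auto
    have "(W * Dk) * (D * V) = ((W * Dk) * D) * V" by (rule assoc_mult_mat[OF WDk Dc V, symmetric])
    also have "(W * Dk) * D = W * (Dk * D)" by (rule assoc_mult_mat[OF W Dkc Dc])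
    finally show ?thesis .
  qed
  finally show ?case using DD by (simp add: D_def)
qed

lemma poly_conj:
  assumes W: "W \<in> carrier_mat n n" and V: "V \<in> carrier_mat n n"
    and WV: "W * V = 1\<^sub>m n" and VW: "V * W = 1\<^sub>m n"
  shows "poly_mat sm p (W * mat_diag n (\<lambda>i. sm (x i) 1) * V) = W * mat_diag n (\<lambda>i. sm (poly p (x i)) 1) * V"
proof -
  define M where "M = W * mat_diag n (\<lambda>i. sm (x i) 1) * V"
  have Mc: "M \<in> carrier_mat n n" unfolding M_def using W V by auto
  show ?thesis unfolding M_def[symmetric]
  proof (rule eq_matI)
    fix i j assume "i < dim_row (W * mat_diag n (\<lambda>i. sm (poly p (x i)) 1) * V)"
      "j < dim_col (W * mat_diag n (\<lambda>i. sm (poly p (x i)) 1) * V)"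
    hence ij: "i < n" "j < n" using W V by auto
    have "poly_mat sm p M $$ (i,j) = (\<Sum>k\<le>degree p. sm (coeff p k) ((M ^\<^sub>m k) $$ (i,j)))"
      unfolding poly_mat_def using Mc ij by simp
    also have "\<dots> = (\<Sum>k\<le>degree p. \<Sum>a<n. W $$ (i,a) * sm (coeff p k * x a ^ k) 1 * V $$ (a,j))"
      unfolding M_def pow_conj[OF W V WV VW] diag_sandwich_entry[OF W V ij]
      by (simp add: sm_sumR sm_sandwich sm_assoc)
    also have "\<dots> = (\<Sum>a<n. W $$ (i,a) * (\<Sum>k\<le>degree p. sm (coeff p k * x a ^ k) 1) * V $$ (a,j))"
    proof -
      have d: "(\<Sum>k\<le>degree p. y * g k * z) = y * (\<Sum>k\<le>degree p. g k) * z" for y z :: 'r and g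
        by (simp add: sum_distrib_left sum_distrib_right)
      show ?thesis by (subst sum.swap, rule sum.cong[OF refl], rule d)
    qed
    also have "\<dots> = (\<Sum>a<n. W $$ (i,a) * sm (poly p (x a)) 1 * V $$ (a,j))"
      by (simp add: poly_altdef sm_sumL)
    also have "\<dots> = (W * mat_diag n (\<lambda>i. sm (poly p (x i)) 1) * V) $$ (i,j)"
      using diag_sandwich_entry[OF W V ij] by simp
    finally show "poly_mat sm p M $$ (i,j) = (W * mat_diag n (\<lambda>i. sm (poly p (x i)) 1) * V) $$ (i,j)" .
  qed (insert Mc W V, auto simp: poly_mat_def)
qed


lemma sandwich_eq:
  fixes M :: "'r mat"
  assumes W: "W \<in> carrier_mat n n" and V: "V \<in> carrier_mat n n" and M: "M \<in> carrier_mat n n"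
    and Z: "Z \<in> carrier_mat n n" and WV: "W * V = 1\<^sub>m n" and MW: "M * W = W * Z"
  shows "W * Z * V = M"
proof -
  have "W * Z * V = M * W * V" using MW by simp
  also have "\<dots> = M * (W * V)" by (rule assoc_mult_mat[OF M W V])
  also have "\<dots> = M" using WV right_mult_one_mat[OF M] by simp
  finally show ?thesis .
qed

lemma zero_diag_in:
  fixes p :: "'f poly"
  assumes inf: "infinite (UNIV :: 'f set)" and deg: "degree p \<ge> 1"
    and X: "X \<in> carrier_mat n n" and zd: "\<forall>i<n. X $$ (i,i) = 0"
  shows "X \<in> poly_commutators sm p n"
proof -
  have fin: "finite {x. poly p x = c}" for c
  proof -
    have "p - [:c:] \<noteq> 0"
    proof
      assume "p - [:c:] = 0"
      hence "p = [:c:]" by simp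
      thus False using deg by simp
    qed
    hence "finite {x. poly (p - [:c:]) x = 0}" by (rule poly_roots_finite)
    moreover have "{x. poly (p - [:c:]) x = 0} = {x. poly p x = c}" by auto
    ultimately show ?thesis by simp
  qed
  have "infinite (range (poly p))"
  proof
    assume "finite (range (poly p))"
    hence "finite (\<Union>c\<in>range (poly p). {x. poly p x = c})" using fin by blast
    moreover have "(\<Union>c\<in>range (poly p). {x. poly p x = c}) = UNIV" by auto
    ultimately show False using inf by simp
  qed
  then obtain f :: "nat \<Rightarrow> 'f" where f: "inj f" "range f \<subseteq> range (poly p)"
    using infinite_countable_subset by blast
  define lam where "lam i = (SOME y. poly p y = f i)" for i
  have plam: "poly p (lam i) = f i" for i
  proof -
    obtain y where "f i = poly p y" using f(2) by blast
    thus ?thesis unfolding lam_def by (metis (mono_tags, lifting) someI)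
  qed
  define \<zeta> where "\<zeta> i = sm (f i) 1" for i
  define \<delta> where "\<delta> i j = sm (inverse (f i - f j)) 1" for i j
  have cent: "\<zeta> i * x = x * \<zeta> i" for i x unfolding \<zeta>_def by (rule sc_central)
  have inv: "(\<zeta> i - \<zeta> j) * \<delta> i j = 1" if "i \<noteq> j" for i j
  proof -
    have "f i - f j \<noteq> 0" using f(1) that by (auto dest: injD)
    hence "(f i - f j) * inverse (f i - f j) = 1" by simp
    moreover have "\<zeta> i - \<zeta> j = sm (f i - f j) 1" unfolding \<zeta>_def by (simp add: sm_diffL)
    ultimately show ?thesis unfolding \<delta>_def by (simp add: sc_mult sm_one)
  qed
  define L where "L = mat n n (\<lambda>(i,j). if i = j then \<zeta> i else if j < i then X $$ (i,j) else 0)"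
  define U where "U = mat n n (\<lambda>(i,j). if i = j then \<zeta> i else if i < j then - X $$ (i,j) else 0)"
  have Lc: "L \<in> carrier_mat n n" and Uc: "U \<in> carrier_mat n n" unfolding L_def U_def by auto
  have "\<exists>W V. W \<in> carrier_mat n n \<and> V \<in> carrier_mat n n \<and> W * V = 1\<^sub>m n \<and> V * W = 1\<^sub>m n
         \<and> L * W = W * mat_diag n \<zeta>"
    by (rule lower_diag[where \<zeta>=\<zeta> and \<delta>=\<delta>, OF cent]) (auto simp: L_def inv)
  then obtain W1 V1 where W1: "W1 \<in> carrier_mat n n" and V1: "V1 \<in> carrier_mat n n"
    and WV1: "W1 * V1 = 1\<^sub>m n" and VW1: "V1 * W1 = 1\<^sub>m n" and LW1: "L * W1 = W1 * mat_diag n \<zeta>"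
    by blast
  have "\<exists>W V. W \<in> carrier_mat n n \<and> V \<in> carrier_mat n n \<and> W * V = 1\<^sub>m n \<and> V * W = 1\<^sub>m n
         \<and> U * W = W * mat_diag n \<zeta>"
    by (rule upper_diag[where \<zeta>=\<zeta> and \<delta>=\<delta>, OF cent]) (auto simp: U_def inv)
  then obtain W2 V2 where W2: "W2 \<in> carrier_mat n n" and V2: "V2 \<in> carrier_mat n n"
    and WV2: "W2 * V2 = 1\<^sub>m n" and VW2: "V2 * W2 = 1\<^sub>m n" and UW2: "U * W2 = W2 * mat_diag n \<zeta>"
    by blast
  define D where "D = mat_diag n (\<lambda>i. sm (lam i) 1)"
  have Dc: "D \<in> carrier_mat n n" unfolding D_def by auto
  define A where "A = W1 * D * V2"
  define B where "B = W2 * V1"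
  have Ac: "A \<in> carrier_mat n n" unfolding A_def using W1 Dc V2 by auto
  have Bc: "B \<in> carrier_mat n n" unfolding B_def using W2 V1 by auto
  have W1D: "W1 * D \<in> carrier_mat n n" using W1 Dc by auto
  have AB: "A * B = W1 * D * V1"
  proof -
    have "A * B = (W1 * D) * (V2 * (W2 * V1))" unfolding A_def B_def
      by (rule assoc_mult_mat[OF W1D V2], insert W2 V1, auto)
    also have "V2 * (W2 * V1) = V1"
      using assoc_mult_mat[OF V2 W2 V1, symmetric] VW2 V1 by simp
    finally show ?thesis .
  qed
  have BA: "B * A = W2 * D * V2"
  proof -
    have "B * A = W2 * (V1 * (W1 * D * V2))" unfolding A_def B_def
      using assoc_mult_mat[OF W2 V1, of "W1 * D * V2" n] W1D V2 by auto
    also have "V1 * (W1 * D * V2) = V1 * (W1 * D) * V2"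
      by (rule assoc_mult_mat[OF V1 W1D V2, symmetric])
    also have "V1 * (W1 * D) = D"
      using assoc_mult_mat[OF V1 W1 Dc, symmetric] VW1 Dc by simp
    also have "W2 * (D * V2) = W2 * D * V2"
      by (rule assoc_mult_mat[OF W2 Dc V2, symmetric])
    finally show ?thesis .
  qed
  have Zeq: "mat_diag n (\<lambda>i. sm (poly p (lam i)) 1) = mat_diag n \<zeta>"
    unfolding \<zeta>_def plam ..
  have pAB: "poly_mat sm p (A * B) = L"
    unfolding AB D_def poly_conj[OF W1 V1 WV1 VW1] Zeq
    by (rule sandwich_eq[OF W1 V1 Lc _ WV1 LW1], simp)
  have pBA: "poly_mat sm p (B * A) = U"
    unfolding BA D_def poly_conj[OF W2 V2 WV2 VW2] Zeq
    by (rule sandwich_eq[OF W2 V2 Uc _ WV2 UW2], simp)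
  have "X = L - U"
  proof (rule eq_matI)
    fix i j assume "i < dim_row (L - U)" "j < dim_col (L - U)"
    hence ij: "i < n" "j < n" using Lc Uc by auto
    show "X $$ (i,j) = (L - U) $$ (i,j)"
      using ij zd by (cases "i = j"; cases "j < i") (auto simp: L_def U_def)
  qed (insert X Lc Uc, auto)
  thus ?thesis unfolding poly_commutators_def using pAB pBA Ac Bc by blast
qed

end


lemma lower_factor:
  fixes T :: "'a::ring_1 mat"
  assumes n: "n \<ge> 3" and T: "T \<in> carrier_mat n n" and lo: "lower_triangular T"
  shows "\<exists>X Y. X \<in> carrier_mat n n \<and> Y \<in> carrier_mat n n \<and> (\<forall>i<n. X $$ (i,i) = 0)
     \<and> (\<forall>i<n. Y $$ (i,i) = 0) \<and> T = X * Y"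
proof -
  have "upper_triangular (revm n T)"
    unfolding upper_triangular_def using lo T unfolding lower_triangular_def by auto
  from upper_factor[OF n revm_carrier this] obtain X Y where
    X: "X \<in> carrier_mat n n" and Y: "Y \<in> carrier_mat n n" and Xd: "\<forall>i<n. X $$ (i,i) = 0"
    and Yd: "\<forall>i<n. Y $$ (i,i) = 0" and e: "revm n T = X * Y" by blast
  have "T = revm n (revm n T)" using T by (simp add: revm_revm)
  also have "\<dots> = revm n X * revm n Y" unfolding e using X Y by (simp add: revm_mult)
  finally show ?thesis using Xd Yd
    by (intro exI[of _ "revm n X"] exI[of _ "revm n Y"], auto)
qed

theorem theorem4p1:
  fixes sm :: "'f::field \<Rightarrow> 'r::ring_1 \<Rightarrow> 'r"
    and p :: "'f poly" and n :: nat and T :: "'r mat"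
  assumes "F_algebra sm"
    and "infinite (UNIV :: 'f set)"
    and "n \<ge> 3"
    and "degree p \<ge> 1"
    and "T \<in> carrier_mat n n"
    and "upper_triangular T \<or> lower_triangular T"
  shows "\<exists>X Y. X \<in> poly_commutators sm p n \<and> Y \<in> poly_commutators sm p n \<and> T = X * Y"
proof -
  have "\<exists>X Y. X \<in> carrier_mat n n \<and> Y \<in> carrier_mat n n \<and> (\<forall>i<n. X $$ (i,i) = 0)
     \<and> (\<forall>i<n. Y $$ (i,i) = 0) \<and> T = X * Y"
    using assms(6) upper_factor[OF assms(3,5)] lower_factor[OF assms(3,5)] by blast
  then obtain X Y where X: "X \<in> carrier_mat n n" and Y: "Y \<in> carrier_mat n n"
    and Xd: "\<forall>i<n. X $$ (i,i) = 0" and Yd: "\<forall>i<n. Y $$ (i,i) = 0" and e: "T = X * Y" by blast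
  have "X \<in> poly_commutators sm p n" by (rule zero_diag_in[OF assms(1,2,4) X Xd])
  moreover have "Y \<in> poly_commutators sm p n" by (rule zero_diag_in[OF assms(1,2,4) Y Yd])
  ultimately show ?thesis using e by blast
qed

end
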